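(* Let $\gamma>0$. Define a positive sequence $(a_n)_{n\ge 1}$ by $a_n = a_1\,(n\ln^2 n)^{-1}$ for $n\ge 2$, where $a_1>0$ is chosen so that $\sum_{n=1}^\infty a_n=\gamma/2$. Then the infinite product $$w_\gamma(t)=c_\gamma\prod_{n=1}^\infty\Big(\frac{\sin(a_n t)}{a_n t}\Big)^2$$ defines an even, non-negative function $w_\gamma\in L^1(\mathbb{R})$, and $c_\gamma>0$ can be chosen so that $\int_{\mathbb{R}} w_\gamma(t)\,dt=1$. With this choice, for all $t\ge \mathrm{e}^{1/\sqrt2}/\gamma$, $$0\le w_\gamma(t)\le 2(\mathrm{e}\gamma)^2\, t\,\exp\Big(-\frac{2}{7}\,\frac{\gamma t}{\ln^2(\gamma t)}\Big).$$ *)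

theory Defs
  imports "HOL-Analysis.Analysis"
begin

definition sinc :: "real \<Rightarrow> real" where
  "sinc x = (if x = 0 then 1 else sin x / x)"

definition wprod :: "(nat \<Rightarrow> real) \<Rightarrow> real \<Rightarrow> real" where
  "wprod a t = (\<Prod>n. (sinc (a (Suc n) * t))\<^sup>2)"

end

theory Submission
  imports Defs
begin


lemma cos_lower: "1 - x^2/2 \<le> cos (x::real)"
proof -
  have "cos x = 1 - 2 * (sin (x/2))^2" using cos_double_sin[of "x/2"] by simp
  moreover have "(sin (x/2))^2 \<le> (x/2)^2"
    using abs_sin_x_le_abs_x[of "x/2"] abs_le_square_iff by blast
  ultimately show ?thesis by (simp add: power_divide)
qed

lemma sin_lower: assumes "0 \<le> x" shows "x - x^3/6 \<le> sin (x::real)"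
proof -
  let ?h = "\<lambda>x::real. sin x - x + x^3/6"
  have "?h 0 \<le> ?h x"
  proof (rule DERIV_nonneg_imp_nondecreasing[OF assms])
    fix y :: real assume "0 \<le> y" "y \<le> x"
    have "(?h has_real_derivative (cos y - 1 + y^2/2)) (at y)"
      by (auto intro!: derivative_eq_intros simp: power2_eq_square)
    moreover have "0 \<le> cos y - 1 + y^2/2" using cos_lower[of y] by simp
    ultimately show "\<exists>d. (?h has_real_derivative d) (at y) \<and> 0 \<le> d" by blast
  qed
  then show ?thesis by simp
qed

lemma sinc_even: "sinc (-x) = sinc x" by (simp add: sinc_def)

lemma sinc_abs_le1: "\<bar>sinc x\<bar> \<le> 1"
  using abs_sin_x_le_abs_x[of x] by (auto simp: sinc_def abs_divide divide_le_eq_1)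

lemma sinc_ge_pos: assumes "x > 0" shows "1 - x^2/6 \<le> sinc x"
proof -
  have "(x - x^3/6)/x \<le> sin x / x" using sin_lower[of x] assms by (simp add: divide_right_mono)
  moreover have "(x - x^3/6)/x = 1 - x^2/6" using assms by (simp add: field_simps power2_eq_square power3_eq_cube)
  ultimately show ?thesis using assms by (simp add: sinc_def)
qed

lemma sinc_ge: "1 - x^2/6 \<le> sinc x"
proof (cases "x = 0")
  case True then show ?thesis by (simp add: sinc_def)
next
  case False
  show ?thesis
  proof (cases "x > 0")
    case True then show ?thesis by (rule sinc_ge_pos)
  next
    case False
    with \<open>x \<noteq> 0\<close> have "-x > 0" by simp
    from sinc_ge_pos[OF this] show ?thesis by (simp only: sinc_even power2_minus)
  qed
qed

lemma sinc_sq_ge: "1 - x^2/3 \<le> (sinc x)^2"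
proof (cases "x^2 \<le> 3")
  case True
  then have h: "0 \<le> 1 - x^2/6" by simp
  have "(1 - x^2/6)^2 \<le> (sinc x)^2"
    using sinc_ge[of x] h by (simp add: power_mono)
  moreover have "(1 - x^2/6)^2 = 1 - x^2/3 + (x^2)^2/36" by (simp add: power2_eq_square algebra_simps)
  moreover have "0 \<le> (x^2)^2" by simp
  ultimately show ?thesis by linarith
next
  case False
  then have "1 - x^2/3 \<le> 0" by simp
  then show ?thesis using zero_le_power2[of "sinc x"] by linarith
qed

lemma sinc_sq_le1: "(sinc x)^2 \<le> 1"
proof -
  have "\<bar>sinc x\<bar>^2 \<le> 1^2" by (rule power_mono) (simp_all add: sinc_abs_le1)
  then show ?thesis by simp
qed

lemma sinc_sq_nonneg: "0 \<le> (sinc x)^2" by simp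

lemma sinc_sq_le_inv: assumes "x \<noteq> 0" shows "(sinc x)^2 \<le> 1/x^2"
proof -
  have "\<bar>sin x\<bar>^2 \<le> 1^2" by (rule power_mono) simp_all
  then have "(sin x)^2 \<le> 1" by simp
  then have "(sin x)^2 / x^2 \<le> 1/x^2" by (rule divide_right_mono) simp
  then show ?thesis using assms by (simp add: sinc_def power_divide)
qed

lemma sinc_sq_le2: "(sinc x)^2 \<le> 2 * inverse (1 + x^2)"
proof -
  have p: "0 < 1 + x^2" by (simp add: add_pos_nonneg)
  show ?thesis
  proof (cases "x^2 \<le> 1")
    case True
    have "inverse 2 \<le> inverse (1 + x^2)" using True p by (intro le_imp_inverse_le) auto
    moreover have "inverse (2::real) = 1/2" by simp
    ultimately show ?thesis using sinc_sq_le1[of x] by linarith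
  next
    case False
    then have "x \<noteq> 0" by auto
    have "(1+x^2)/2 \<le> x^2" using False by simp
    then have "inverse (x^2) \<le> inverse ((1+x^2)/2)" by (rule le_imp_inverse_le) (use p in simp)
    moreover have "inverse ((1+x^2)/2) = 2 * inverse (1+x^2)" by (simp add: inverse_eq_divide)
    moreover have "1/x^2 = inverse (x^2)" by (simp add: inverse_eq_divide)
    ultimately show ?thesis using sinc_sq_le_inv[OF \<open>x \<noteq> 0\<close>] by linarith
  qed
qed

lemma sinc_measurable[measurable]: "sinc \<in> borel_measurable borel"
  unfolding sinc_def by measurable

lemma integrable_inv_1_sq:
  "set_integrable lborel (einterval (-\<infinity>) \<infinity>) (\<lambda>x::real. inverse (1 + x^2))"
proof -
  have 1: "- (pi / 2) < x \<Longrightarrow> x * 2 < pi \<Longrightarrow> (tan has_real_derivative 1 + (tan x)\<^sup>2) (at x)" for x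
    using cos_gt_zero_pi[of x] by (subst tan_sec) (auto intro!: DERIV_tan simp: power_inverse)
  have 2: "- (pi / 2) < x \<Longrightarrow> x * 2 < pi \<Longrightarrow> isCont (\<lambda>x. 1 + (tan x)\<^sup>2) x" for x
    using cos_gt_zero_pi[of x] by auto
  have 3: "\<lbrakk>- (pi / 2) < x; x * 2 < pi\<rbrakk>  \<Longrightarrow> isCont (\<lambda>x. inverse (1 + x\<^sup>2)) (tan x)" for x
    by (rule continuous_intros | simp add: add_nonneg_eq_0_iff)+
  show ?thesis
    by (subst interval_integral_substitution_nonneg[of "-pi/2" "pi/2" tan "\<lambda>x. 1 + (tan x)^2"])
       (auto intro: derivative_eq_intros 1 2 3 filterlim_tan_at_right
             simp add: ereal_tendsto_simps filterlim_tan_at_left add_nonneg_eq_0_iff set_integrable_def)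
qed

lemma integrable_inv_1_sq': "integrable lborel (\<lambda>x::real. inverse (1 + x^2))"
proof -
  have "einterval (-\<infinity>) \<infinity> = (UNIV :: real set)" by (auto simp: einterval_def)
  then show ?thesis using integrable_inv_1_sq by (simp add: set_integrable_def)
qed


lemma ln_ratio_ge: assumes "K \<ge> 1" shows "1/(K+1) \<le> ln (K+1) - ln (K::real)"
proof -
  have "ln (K/(K+1)) \<le> K/(K+1) - 1" using assms by (intro ln_le_minus_one) simp
  moreover have "ln (K/(K+1)) = ln K - ln (K+1)" using assms by (simp add: ln_div)
  moreover have "K/(K+1) - 1 = -1/(K+1)" using assms by (simp add: field_simps)
  ultimately show ?thesis by simp
qed

lemma tele_step: assumes "K \<ge> 2" shows "1/((K+1) * (ln (K+1))^2) \<le> 1/ln K - 1/ln (K+1::real)"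
proof -
  define u where "u = ln (K+1)"
  define v where "v = ln K"
  have v0: "0 < v" using assms by (simp add: v_def)
  have vu: "v < u" using assms by (simp add: u_def v_def)
  have d: "1/(K+1) \<le> u - v" using ln_ratio_ge[of K] assms by (simp add: u_def v_def)
  have "1/((K+1) * u^2) = (1/(K+1)) / u^2" by simp
  also have "\<dots> \<le> (u - v) / u^2" using d by (intro divide_right_mono) simp_all
  also have "\<dots> \<le> (u - v) / (u * v)" using v0 vu d
    by (intro divide_left_mono) (auto simp: power2_eq_square intro: mult_left_mono)
  also have "\<dots> = 1/v - 1/u" using v0 vu by (simp add: field_simps)
  finally show ?thesis by (simp add: u_def v_def)
qed

locale wsetup =
  fixes g :: real and a :: "nat \<Rightarrow> real"
  assumes g: "g > 0" and a1: "a 1 > 0"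
    and an: "\<And>n. n \<ge> 2 \<Longrightarrow> a n = a 1 / (real n * (ln (real n))\<^sup>2)"
    and asums: "(\<lambda>n. a (Suc n)) sums (g/2)"
begin

lemma apos: assumes "n \<ge> 1" shows "a n > 0"
proof (cases "n \<ge> 2")
  case True
  then have "ln (real n) > 0" by simp
  then show ?thesis using an[OF True] a1 True by simp
next
  case False then have "n = 1" using assms by simp
  then show ?thesis using a1 by simp
qed

lemma aSpos: "a (Suc n) > 0" using apos by simp

lemma asummable: "summable (\<lambda>n. a (Suc n))" using asums by (rule sums_summable)
lemma asuminf: "(\<Sum>n. a (Suc n)) = g/2" using asums by (rule sums_unique[symmetric])

lemma apartial: "(\<Sum>i\<in>I. a (Suc i)) \<le> g/2" if "finite I"
  using sum_le_suminf[OF asummable that] aSpos asuminf by (simp add: less_imp_le)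

lemma a_le: "a (Suc n) \<le> g/2" using apartial[of "{n}"] by simp

definition C0 :: real where "C0 = 1 + 1/(2*(ln 2)^2) + 1/(3*(ln 3)^2) + 1/ln 3"

lemma psum3: "M \<ge> 3 \<Longrightarrow> (\<Sum>i<M. a (Suc i)) \<le> a 1 * (C0 - 1/ln (real M))"
proof (induction M rule: dec_induct)
  case base
  have "(\<Sum>i<3. a (Suc i)) = a 1 + a 2 + a 3" by (simp add: numeral_3_eq_3 eval_nat_numeral)
  also have "\<dots> = a 1 * (C0 - 1/ln (real 3))"
  proof -
    have h2: "a 2 = a 1 * (1/(2*(ln 2)^2))" using an[of 2] by simp
    have h3: "a 3 = a 1 * (1/(3*(ln 3)^2))" using an[of 3] by simp
    show ?thesis unfolding h2 h3 C0_def by (simp add: algebra_simps)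
  qed
  finally show ?case by simp
next
  case (step M)
  have "(\<Sum>i<Suc M. a (Suc i)) = (\<Sum>i<M. a (Suc i)) + a (Suc M)" by simp
  also have "a (Suc M) = a 1 * (1/((real M + 1) * (ln (real M + 1))^2))"
    using an[of "Suc M"] step by (simp add: add.commute)
  also have "\<dots> \<le> a 1 * (1/ln (real M) - 1/ln (real M + 1))"
    using tele_step[of "real M"] step a1 by (intro mult_left_mono) simp_all
  finally show ?case using step a1 by (simp add: algebra_simps add.commute)
qed

lemma C0_le: "C0 \<le> 7/2"
proof -
  have l2: "2/3 \<le> ln (2::real)" by (rule ln2_ge_two_thirds)
  have l3: "1 \<le> ln (3::real)" using exp_le by (simp add: ln_ge_iff)
  have "(2/3)^2 \<le> (ln (2::real))^2" using l2 by (intro power_mono) simp_all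
  then have "1/(2*(ln 2)^2) \<le> 1/(2*(2/3)^2::real)" by (intro divide_left_mono) (simp_all add: power2_eq_square)
  moreover have "1/(2*(2/3)^2::real) = 9/8" by (simp add: power2_eq_square)
  ultimately have h1: "1/(2*(ln 2)^2) \<le> (9/8::real)" by linarith
  have "1 \<le> (ln (3::real))^2" using l3 by (simp add: one_le_power)
  then have "1/(3*(ln 3)^2) \<le> 1/(3::real)" by (intro divide_left_mono) simp_all
  moreover have h3: "1/ln 3 \<le> (1::real)" using l3 by simp
  ultimately show ?thesis unfolding C0_def using h1 by linarith
qed

lemma psum_le: "(\<Sum>i<M. a (Suc i)) \<le> 7/2 * a 1"
proof -
  have "(\<Sum>i<M. a (Suc i)) \<le> (\<Sum>i<max M 3. a (Suc i))"
    using aSpos by (intro sum_mono2) (auto simp: less_imp_le)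
  also have "\<dots> \<le> a 1 * (C0 - 1/ln (real (max M 3)))" by (rule psum3) simp
  also have "\<dots> \<le> a 1 * C0" using a1 by (intro mult_left_mono) simp_all
  also have "\<dots> \<le> a 1 * (7/2)" using a1 C0_le by (intro mult_left_mono) simp_all
  finally show ?thesis by simp
qed

lemma a1_ge: "g/7 \<le> a 1"
proof -
  have "(\<lambda>M. \<Sum>i<M. a (Suc i)) \<longlonglongrightarrow> g/2" using asums by (simp add: sums_def)
  then have "g/2 \<le> 7/2 * a 1" by (rule LIMSEQ_le_const2) (use psum_le in auto)
  then show ?thesis by simp
qed

end


lemma prod_one_minus_ge:
  fixes u :: "nat \<Rightarrow> real"
  assumes "finite A" "\<And>i. i \<in> A \<Longrightarrow> 0 \<le> u i \<and> u i \<le> 1"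
  shows "1 - sum u A \<le> (\<Prod>i\<in>A. 1 - u i)"
  using assms
proof (induction A rule: finite_induct)
  case empty then show ?case by simp
next
  case (insert x A)
  have IH: "1 - sum u A \<le> (\<Prod>i\<in>A. 1 - u i)" using insert by auto
  have ux: "0 \<le> u x" "u x \<le> 1" using insert by auto
  have S: "0 \<le> sum u A" using insert by (auto intro: sum_nonneg)
  have "(1 - u x) * (1 - sum u A) \<le> (1 - u x) * (\<Prod>i\<in>A. 1 - u i)"
    using IH ux by (intro mult_left_mono) simp_all
  moreover have "1 - (u x + sum u A) \<le> (1 - u x) * (1 - sum u A)"
    using ux S by (simp add: algebra_simps)
  ultimately show ?case using insert by simp
qed

context wsetup begin

abbreviation F where "F t i \<equiv> (sinc (a (Suc i) * t))^2"

lemma F_bound: "norm (F t i - 1) \<le> (g/2 * t^2/3) * a (Suc i)"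
proof -
  have "(a (Suc i))^2 \<le> g/2 * a (Suc i)"
    using a_le[of i] aSpos[of i] by (simp add: power2_eq_square mult_right_mono)
  then have "(a (Suc i))^2 * t^2 \<le> g/2 * a (Suc i) * t^2"
    by (intro mult_right_mono) simp_all
  then have Y: "((a (Suc i))^2 * t^2)/3 \<le> (g/2 * a (Suc i) * t^2)/3"
    by (rule divide_right_mono) simp
  have E1: "(a (Suc i) * t)^2/3 = ((a (Suc i))^2 * t^2)/3" by (simp add: power_mult_distrib)
  have E2: "(g/2 * t^2/3) * a (Suc i) = (g/2 * a (Suc i) * t^2)/3" by simp
  have X: "(a (Suc i) * t)^2/3 \<le> (g/2 * t^2/3) * a (Suc i)" unfolding E1 E2 by (rule Y)
  have "norm (F t i - 1) = 1 - F t i" using sinc_sq_le1 by simp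
  with X show ?thesis using sinc_sq_ge[of "a (Suc i) * t"] by linarith
qed

lemma conv: "convergent_prod (F t)"
proof -
  have "summable (\<lambda>i. norm (F t i - 1))"
    by (rule summable_comparison_test'[where N=0, OF summable_mult[OF asummable, of "g/2*t^2/3"]])
       (use F_bound in simp)
  then show ?thesis by (intro abs_convergent_prod_imp_convergent_prod summable_imp_abs_convergent_prod)
qed

lemma wlim: "(\<lambda>n. \<Prod>i\<le>n. F t i) \<longlonglongrightarrow> wprod a t"
  unfolding wprod_def by (rule convergent_prod_LIMSEQ[OF conv])

lemma w_nonneg: "0 \<le> wprod a t"
  by (rule LIMSEQ_le_const[OF wlim]) (intro exI allI impI prod_nonneg, simp)

lemma prod_anti: "N \<le> n \<Longrightarrow> (\<Prod>i<n. F t i) \<le> (\<Prod>i<N. F t i)"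
proof (induction n rule: dec_induct)
  case base then show ?case by simp
next
  case (step n)
  have "(\<Prod>i<Suc n. F t i) = (\<Prod>i<n. F t i) * F t n" by simp
  also have "\<dots> \<le> (\<Prod>i<n. F t i) * 1"
    by (intro mult_left_mono sinc_sq_le1) (auto intro: prod_nonneg)
  finally show ?case using step by simp
qed

lemma w_le_prod: "wprod a t \<le> (\<Prod>i<N. F t i)"
  unfolding wprod_def by (rule prodinf_le_const[OF conv]) (rule prod_anti)

lemma w_le1: "wprod a t \<le> 1"
  using w_le_prod[of t 0] by simp

lemma w_even: "wprod a (-t) = wprod a t"
  unfolding wprod_def by (simp add: sinc_even[of "_ * t", simplified])

lemma w_lower: assumes "\<bar>t\<bar> \<le> 2/g" shows "2/3 \<le> wprod a t"
proof (rule LIMSEQ_le_const[OF wlim], intro exI allI impI)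
  fix n :: nat
  define u where "u i = (a (Suc i) * t)^2/3" for i
  have at1: "\<bar>a (Suc i) * t\<bar> \<le> 1" for i
  proof -
    have "\<bar>a (Suc i) * t\<bar> = a (Suc i) * \<bar>t\<bar>" using aSpos[of i] by (simp add: abs_mult)
    also have "\<dots> \<le> g/2 * (2/g)" using a_le[of i] aSpos[of i] assms
      by (intro mult_mono) simp_all
    also have "\<dots> = 1" using g by simp
    finally show ?thesis .
  qed
  have usq: "(a (Suc i) * t)^2 \<le> a (Suc i) * \<bar>t\<bar>" for i
  proof -
    have "(a (Suc i) * t)^2 = \<bar>a (Suc i) * t\<bar> * \<bar>a (Suc i) * t\<bar>" by (simp add: power2_eq_square)
    also have "\<dots> \<le> \<bar>a (Suc i) * t\<bar> * 1" using at1[of i] by (intro mult_left_mono) simp_all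
    finally show ?thesis using aSpos[of i] by (simp add: abs_mult)
  qed
  have u01: "0 \<le> u i \<and> u i \<le> 1" for i
  proof -
    have "\<bar>a (Suc i) * t\<bar>^2 \<le> 1^2" using at1[of i] by (intro power_mono) simp_all
    then have "(a (Suc i) * t)^2 \<le> 1" by simp
    then show ?thesis by (simp add: u_def)
  qed
  have "sum u {..n} \<le> (\<Sum>i\<le>n. a (Suc i) * \<bar>t\<bar> / 3)"
    unfolding u_def by (intro sum_mono divide_right_mono usq) simp
  also have "\<dots> = (\<Sum>i\<le>n. a (Suc i)) * \<bar>t\<bar> / 3" by (simp add: sum_divide_distrib sum_distrib_right)
  also have "\<dots> \<le> (g/2) * (2/g) / 3" using apartial[of "{..n}"] assms less_imp_le[OF g]
    by (intro divide_right_mono mult_mono) (auto intro: sum_nonneg less_imp_le aSpos)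
  also have "\<dots> = 1/3" using g by simp
  finally have su: "sum u {..n} \<le> 1/3" .
  have "1 - sum u {..n} \<le> (\<Prod>i\<le>n. 1 - u i)" by (rule prod_one_minus_ge) (simp_all add: u01)
  also have "\<dots> \<le> (\<Prod>i\<le>n. F t i)"
    using u01 by (intro prod_mono) (simp add: u_def sinc_sq_ge)
  finally show "2/3 \<le> (\<Prod>i\<le>n. F t i)" using su by simp
qed

end


context wsetup begin

lemma w_meas: "wprod a \<in> borel_measurable lborel"
proof (rule borel_measurable_LIMSEQ_real[where u="\<lambda>n t. \<Prod>i\<le>n. F t i"])
  show "\<And>x. x \<in> space lborel \<Longrightarrow> (\<lambda>n. \<Prod>i\<le>n. F x i) \<longlonglongrightarrow> wprod a x" by (rule wlim)
  show "\<And>n. (\<lambda>t. \<Prod>i\<le>n. F t i) \<in> borel_measurable lborel" by measurable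
qed

lemma w_int: "integrable lborel (wprod a)"
proof -
  have "integrable lborel (\<lambda>x. inverse (1 + (0 + a 1 * x)^2))"
    using a1 by (intro lborel_integrable_real_affine integrable_inv_1_sq') simp
  then have I: "integrable lborel (\<lambda>x. 2 * inverse (1 + (a 1 * x)^2))"
    by (intro integrable_mult_right) simp
  have A: "AE x in lborel. norm (wprod a x) \<le> norm (2 * inverse (1 + (a 1 * x)^2))"
  proof (intro AE_I2)
    fix x
    have "wprod a x \<le> (\<Prod>i<1. F x i)" by (rule w_le_prod)
    also have "\<dots> \<le> 2 * inverse (1 + (a 1 * x)^2)" using sinc_sq_le2[of "a 1 * x"] by simp
    finally have "wprod a x \<le> 2 * inverse (1 + (a 1 * x)^2)" .
    moreover have "0 \<le> 2 * inverse (1 + (a 1 * x)^2)" by (simp add: add_nonneg_nonneg)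
    ultimately show "norm (wprod a x) \<le> norm (2 * inverse (1 + (a 1 * x)^2))"
      using w_nonneg[of x] by simp
  qed
  show ?thesis by (rule Bochner_Integration.integrable_bound[OF I w_meas A])
qed

lemma int_lower: "8/(3*g) \<le> integral\<^sup>L lborel (wprod a)"
proof -
  let ?S = "{-2/g..2/g}"
  have "integral\<^sup>L lborel (\<lambda>t. 2/3 * indicator ?S t) \<le> integral\<^sup>L lborel (wprod a)"
  proof (rule integral_mono)
    show "integrable lborel (\<lambda>t. 2/3 * indicator ?S t :: real)"
    proof (intro integrable_mult_right integrable_real_indicator)
      have "-2/g \<le> 2/g" using g by simp
      then show "emeasure lborel ?S < \<infinity>" by (simp add: emeasure_lborel_Icc)
    qed simp
    show "integrable lborel (wprod a)" by (rule w_int)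
    fix t
    show "2/3 * indicator ?S t \<le> wprod a t"
    proof (cases "t \<in> ?S")
      case True
      then have "\<bar>t\<bar> \<le> 2/g" by auto
      then show ?thesis using True w_lower by simp
    next
      case False then show ?thesis using w_nonneg by simp
    qed
  qed
  moreover have "integral\<^sup>L lborel (\<lambda>t. 2/3 * indicator ?S t) = 8/(3*g)"
    using g by (simp add: measure_lborel_Icc)
  ultimately show ?thesis by simp
qed

lemma int_pos: "0 < integral\<^sup>L lborel (wprod a)"
proof -
  have "0 < 8/(3*g)" using g by simp
  then show ?thesis using int_lower by linarith
qed

end


lemma ln_lower2: assumes "0 \<le> u" shows "2*u/(2+u) \<le> ln (1 + (u::real))"
proof -
  let ?h = "\<lambda>u::real. ln (1+u) - 2*u/(2+u)"
  have "?h 0 \<le> ?h u"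
  proof (rule DERIV_nonneg_imp_nondecreasing[OF assms])
    fix y :: real assume y: "0 \<le> y" "y \<le> u"
    have "(?h has_real_derivative (1/(1+y) - 4/(2+y)^2)) (at y)"
      using y by (auto intro!: derivative_eq_intros simp: power2_eq_square)
    moreover have "0 \<le> 1/(1+y) - 4/(2+y)^2"
    proof -
      have nz: "1 + y \<noteq> 0" "(2+y)^2 \<noteq> 0" using y by auto
      have "1/(1+y) - 4/(2+y)^2 = (1 * (2+y)^2 - 4 * (1+y)) / ((1+y)*(2+y)^2)"
        using diff_frac_eq[OF nz] by simp
      also have "1 * (2+y)^2 - 4 * (1+y) = y^2" by (simp add: power2_eq_square algebra_simps)
      finally have eq: "1/(1+y) - 4/(2+y)^2 = y^2 / ((1+y)*(2+y)^2)" .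
      show ?thesis unfolding eq using y by simp
    qed
    ultimately show "\<exists>d. (?h has_real_derivative d) (at y) \<and> 0 \<le> d" by blast
  qed
  then show ?thesis by simp
qed

lemma ln_fact_le: "n \<ge> 1 \<Longrightarrow> ln (fact n) \<le> (real n + 1/2) * ln (real n) - real n + 1"
proof (induction n rule: dec_induct)
  case base then show ?case by simp
next
  case (step n)
  have n0: "real n \<ge> 1" using step by simp
  have "2*(1/real n)/(2 + 1/real n) \<le> ln (1 + 1/real n)" by (rule ln_lower2) simp
  moreover have "2*(1/real n)/(2 + 1/real n) = 2/(2*real n + 1)" using n0 by (simp add: field_simps)
  moreover have "ln (1 + 1/real n) = ln (real n + 1) - ln (real n)"
  proof -
    have "1 + 1/real n = (real n + 1)/real n" using n0 by (simp add: field_simps)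
    then show ?thesis using n0 by (simp add: ln_div)
  qed
  ultimately have d: "2/(2*real n + 1) \<le> ln (real n + 1) - ln (real n)" by simp
  have key: "1 \<le> (real n + 1/2) * (ln (real n + 1) - ln (real n))"
  proof -
    have "(real n + 1/2) * (2/(2*real n + 1)) = 1" using n0 by (simp add: field_simps)
    moreover have "(real n + 1/2) * (2/(2*real n + 1)) \<le> (real n + 1/2) * (ln (real n + 1) - ln (real n))"
      using d n0 by (intro mult_left_mono) simp_all
    ultimately show ?thesis by linarith
  qed
  have "ln (fact (Suc n)) = ln (fact n) + ln (real n + 1)"
    using n0 by (simp add: ln_mult add.commute)
  also have "\<dots> \<le> (real n + 1/2) * ln (real n) - real n + 1 + ln (real n + 1)" using step by simp
  also have "\<dots> \<le> (real (Suc n) + 1/2) * ln (real (Suc n)) - real (Suc n) + 1"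
    using key by (simp add: algebra_simps)
  finally show ?case .
qed

lemma fact_ratio_sq: assumes "N \<ge> 1"
  shows "(fact N / real N ^ N)^2 \<le> real N * exp (2 - 2 * real N)"
proof -
  define q where "q = fact N / real N ^ N"
  have q0: "q > 0" using assms by (simp add: q_def)
  have "ln q = ln (fact N) - real N * ln (real N)" using assms
    by (simp add: q_def ln_div ln_realpow)
  also have "\<dots> \<le> 1/2 * ln (real N) - real N + 1" using ln_fact_le[OF assms] by (simp add: algebra_simps)
  finally have lq: "ln q \<le> 1/2 * ln (real N) - real N + 1" .
  have "exp (2 * ln q) = exp (ln q + ln q)" by simp
  also have "\<dots> = q * q" using q0 by (simp only: exp_add exp_ln)
  finally have "q^2 = exp (2 * ln q)" by (simp add: power2_eq_square)
  also have "\<dots> \<le> exp (ln (real N) + (2 - 2 * real N))" using lq by simp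
  also have "\<dots> = real N * exp (2 - 2 * real N)" using assms by (simp add: exp_add)
  finally show ?thesis by (simp add: q_def)
qed



context wsetup begin

lemma prod_fact: "(\<Prod>i<N. (real (Suc i) / real N)^2) = (fact N / real N ^ N)^2"
proof -
  have f: "(\<Prod>i<N. real (Suc i)) = fact N"
    by (simp add: fact_prod_Suc atLeast0LessThan)
  have "(\<Prod>i<N. (real (Suc i) / real N)^2) = (\<Prod>i<N. real (Suc i) / real N)^2"
    by (simp add: prod_power_distrib)
  also have "(\<Prod>i<N. real (Suc i) / real N) = (\<Prod>i<N. real (Suc i)) / real N ^ N"
    by (simp add: prod_dividef)
  finally show ?thesis using f by simp
qed

lemma w_upper:
  assumes y: "exp 1 \<le> a 1 * t"
  shows "wprod a t \<le> exp 4 * max 1 ((a 1 * t) / (ln (a 1 * t))^2) * exp (-2*((a 1 * t) / (ln (a 1 * t))^2))"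
proof -
  define y where "y = a 1 * t"
  define M where "M = y / (ln y)^2"
  have y0: "0 < y" using y by (simp add: y_def) (meson exp_gt_zero less_le_trans)
  have t0: "t > 0" using y0 a1 by (simp add: y_def zero_less_mult_iff)
  have ly: "1 \<le> ln y" using y y0 by (simp add: y_def ln_ge_iff)
  have ly2: "1 \<le> (ln y)^2" using ly by (simp add: one_le_power)
  have l2p: "0 < (ln y)^2" using ly2 by linarith
  have M0: "0 < M" unfolding M_def using divide_pos_pos[OF y0 l2p] .
  have My: "M \<le> y" unfolding M_def using y0 ly2 by (simp add: divide_le_eq)
  have MyE: "M * (ln y)^2 = y" using l2p by (simp add: M_def)
  define N where "N = nat \<lfloor>M\<rfloor>"
  have NM: "real N \<le> M" using M0 by (simp add: N_def)
  have MN: "M < real N + 1" using M0 by (simp add: N_def)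
  have "wprod a t \<le> exp 4 * max 1 M * exp (-2*M)"
  proof (cases "N = 0")
    case True
    then have "M < 1" using MN by simp
    have "1 \<le> exp (4 - 2*M)" using \<open>M < 1\<close> by simp
    also have "\<dots> = exp 4 * 1 * exp (-2*M)" by (simp add: exp_diff exp_minus field_simps)
    also have "\<dots> = exp 4 * max 1 M * exp (-2*M)" using \<open>M < 1\<close> by simp
    finally show ?thesis using w_le1[of t] by linarith
  next
    case False
    then have N1: "N \<ge> 1" by simp
    have fac: "F t i \<le> (real (Suc i) / real N)^2" if i: "i < N" for i
    proof -
      have key: "real N / real (Suc i) \<le> a (Suc i) * t"
      proof (cases "i = 0")
        case True
        then show ?thesis using NM My by (simp add: y_def)
      next
        case False
        define n where "n = Suc i"
        have n2: "n \<ge> 2" using False by (simp add: n_def)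
        have nN: "real n \<le> real N" using i by (simp add: n_def)
        have ln0: "0 < ln (real n)" using n2 by simp
        have lnn: "ln (real n) \<le> ln y" using nN NM My n2 by simp
        have "(ln (real n))^2 \<le> (ln y)^2" using ln0 lnn by (intro power_mono) simp_all
        then have "real N * (ln (real n))^2 \<le> M * (ln y)^2"
          using NM M0 by (intro mult_mono) simp_all
        then have A: "real N * (ln (real n))^2 \<le> y" using MyE by simp
        have d: "0 < real n * (ln (real n))^2" using n2 ln0 by simp
        have "real N / real n = (real N * (ln (real n))^2) / (real n * (ln (real n))^2)"
          using ln0 by simp
        also have "\<dots> \<le> y / (real n * (ln (real n))^2)" using A d by (intro divide_right_mono) simp_all
        also have "\<dots> = a n * t" using an[OF n2] by (simp add: y_def)
        finally show ?thesis by (simp add: n_def)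
      qed
      have p: "0 < real N / real (Suc i)" using N1 by simp
      then have p2: "0 < a (Suc i) * t" using key by linarith
      have nz: "a (Suc i) * t \<noteq> 0" using p2 by linarith
      have "F t i \<le> 1 / (a (Suc i) * t)^2" by (rule sinc_sq_le_inv[OF nz])
      also have "\<dots> \<le> 1 / (real N / real (Suc i))^2"
      proof -
        have q1: "(real N / real (Suc i))^2 \<le> (a (Suc i) * t)^2"
          by (rule power_mono[OF key]) (use p in linarith)
        have q2: "0 < (real N / real (Suc i))^2" using p by (intro zero_less_power) 
        have q3: "0 < (a (Suc i) * t)^2" using p2 by (intro zero_less_power)
        show ?thesis by (rule divide_left_mono[OF q1 _ mult_pos_pos[OF q3 q2]]) simp
      qed
      also have "\<dots> = (real (Suc i) / real N)^2" by (simp add: power_divide)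
      finally show ?thesis .
    qed
    have "wprod a t \<le> (\<Prod>i<N. F t i)" by (rule w_le_prod)
    also have "\<dots> \<le> (\<Prod>i<N. (real (Suc i) / real N)^2)"
      using fac by (intro prod_mono) simp
    also have "\<dots> = (fact N / real N ^ N)^2" by (rule prod_fact)
    also have "\<dots> \<le> real N * exp (2 - 2 * real N)" by (rule fact_ratio_sq[OF N1])
    also have "\<dots> \<le> M * exp (2 - 2 * (M - 1))"
      using NM MN by (intro mult_mono) simp_all
    also have "\<dots> = exp 4 * M * exp (-2*M)" by (simp add: exp_add[symmetric] algebra_simps)
    also have "\<dots> \<le> exp 4 * max 1 M * exp (-2*M)" by (intro mult_right_mono mult_left_mono) simp_all
    finally show ?thesis .
  qed
  then show ?thesis by (simp add: M_def y_def)
qed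

end


lemma Q_le: fixes x :: real assumes "0 < x" "0 < l0" "l0 \<le> ln x" shows "x/(ln x)^2 \<le> x/l0^2"
proof -
  have "l0^2 \<le> (ln x)^2" by (rule power_mono) (use assms in simp_all)
  moreover have p1: "0 < l0^2" using assms by simp
  ultimately have p2: "0 < (ln x)^2" by linarith
  show ?thesis by (rule divide_left_mono[OF \<open>l0^2 \<le> (ln x)^2\<close> _ mult_pos_pos[OF p2 p1]]) (use assms in simp)
qed

lemma small_case:
  fixes x :: real
  assumes x1: "exp (1 / sqrt 2) \<le> x" and x2: "x \<le> 7 * exp 1"
  shows "x/(ln x)^2 \<le> 21/2"
proof -
  have x0: "0 < x" using x1 by (meson exp_gt_zero less_le_trans)
  have e3: "exp 1 \<le> (3::real)" by (rule exp_le)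
  have s0: "0 < 1 / sqrt (2::real)" by simp
  have lx: "1 / sqrt 2 \<le> ln x" using x1 x0 by (simp add: ln_ge_iff)
  have s2: "(1 / sqrt (2::real))^2 = 1/2" by (simp add: power_divide)
  show ?thesis
  proof (cases "x \<le> exp 1")
    case True
    have "x/(ln x)^2 \<le> x/(1/sqrt 2)^2" by (rule Q_le[OF x0 s0 lx])
    also have "\<dots> = 2 * x" unfolding s2 by simp
    finally show ?thesis using True e3 by linarith
  next
    case False
    show ?thesis
    proof (cases "x \<le> exp 2")
      case True
      have l1: "1 \<le> ln x" using False x0 by (simp add: ln_ge_iff)
      have "x/(ln x)^2 \<le> x/1^2" by (rule Q_le[OF x0 _ l1]) simp
      then have "x/(ln x)^2 \<le> x" by simp
      moreover have "exp (2::real) = exp 1 * exp 1" by (simp flip: exp_add)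
      moreover have "exp 1 * exp 1 \<le> (3 * 3::real)" using e3 by (intro mult_mono) simp_all
      ultimately show ?thesis using True by linarith
    next
      case False
      have l2: "2 \<le> ln x" using False x0 by (simp add: ln_ge_iff)
      have "x/(ln x)^2 \<le> x/2^2" by (rule Q_le[OF x0 _ l2]) simp
      moreover have "x/2^2 = x/4" by simp
      ultimately show ?thesis using x2 e3 by linarith
    qed
  qed
qed

theorem mainTheorem1:
  fixes \<gamma> :: real and a :: "nat \<Rightarrow> real"
  assumes "\<gamma> > 0"
    and "a 1 > 0"
    and "\<And>n. n \<ge> 2 \<Longrightarrow> a n = a 1 / (real n * (ln (real n))\<^sup>2)"
    and "(\<lambda>n. a (Suc n)) sums (\<gamma> / 2)"
  shows "(\<forall>t. convergent_prod (\<lambda>n. (sinc (a (Suc n) * t))\<^sup>2))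
    \<and> (\<forall>t. wprod a (- t) = wprod a t)
    \<and> (\<forall>t. wprod a t \<ge> 0)
    \<and> integrable lborel (wprod a)
    \<and> (\<exists>c>0. (\<integral>t. c * wprod a t \<partial>lborel) = 1)
    \<and> (\<forall>c. c > 0 \<and> (\<integral>t. c * wprod a t \<partial>lborel) = 1 \<longrightarrow>
         (\<forall>t. t \<ge> exp (1 / sqrt 2) / \<gamma> \<longrightarrow>
            0 \<le> c * wprod a t \<and>
            c * wprod a t \<le> 2 * (exp 1 * \<gamma>)\<^sup>2 * t *
               exp (- (2 / 7) * (\<gamma> * t) / (ln (\<gamma> * t))\<^sup>2)))"
proof -
  interpret wsetup \<gamma> a by unfold_locales (use assms in auto)
  define I where "I = integral\<^sup>L lborel (wprod a)"
  have Ilow: "8/(3*\<gamma>) \<le> I" using int_lower by (simp add: I_def)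
  have Ipos: "0 < I" using int_pos by (simp add: I_def)
  have P5: "\<exists>c>0. (\<integral>t. c * wprod a t \<partial>lborel) = 1"
    by (intro exI[of _ "1/I"]) (use Ipos in \<open>simp add: I_def\<close>)
  have P6: "0 \<le> c * wprod a t \<and>
            c * wprod a t \<le> 2 * (exp 1 * \<gamma>)\<^sup>2 * t *
               exp (- (2 / 7) * (\<gamma> * t) / (ln (\<gamma> * t))\<^sup>2)"
    if c: "c > 0" "(\<integral>t. c * wprod a t \<partial>lborel) = 1" and t: "t \<ge> exp (1 / sqrt 2) / \<gamma>" for c t
  proof -
    have cI: "c * I = 1" using c by (simp add: I_def)
    have c_le: "c \<le> 3*\<gamma>/8"
    proof -
      have "c = 1/I" using cI Ipos by (simp add: field_simps)
      also have "\<dots> \<le> 1/(8/(3*\<gamma>))"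
      proof (rule divide_left_mono[OF Ilow])
        show "0 < I * (8/(3*\<gamma>))" using Ipos g by simp
      qed simp
      also have "\<dots> = 3*\<gamma>/8" by simp
      finally show ?thesis .
    qed
    define x where "x = \<gamma> * t"
    have x1: "exp (1/sqrt 2) \<le> x" using t g by (simp add: x_def divide_le_eq mult.commute)
    have x0: "0 < x" using x1 by (meson exp_gt_zero less_le_trans)
    have t0: "0 < t" using x0 g by (simp add: x_def zero_less_mult_iff)
    have "1 \<le> exp (1/sqrt (2::real))" by simp
    then have xge1: "1 \<le> x" using x1 by linarith
    define Q where "Q = x/(ln x)^2"
    have Eeq: "exp (- (2 / 7) * (\<gamma> * t) / (ln (\<gamma> * t))\<^sup>2) = exp (- (2/7 * Q))"
      by (simp add: Q_def x_def)
    have R: "2 * (exp 1 * \<gamma>)\<^sup>2 * t = 2 * (exp 1)^2 * \<gamma> * x"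
      by (simp add: x_def power2_eq_square)
    have w0: "0 \<le> wprod a t" by (rule w_nonneg)
    have e3: "exp 1 \<le> (3::real)" by (rule exp_le)
    have e0: "0 < exp (1::real)" by simp
    have "(exp 1)^2 \<le> (3::real)^2" by (rule power_mono) (use e3 in simp_all)
    then have ee: "(exp 1)^2 \<le> (9::real)" by simp
    have e4: "exp (4::real) = (exp 1)^2 * (exp 1)^2"
    proof -
      have "exp (4::real) = exp (1+1+1+1)" by simp
      also have "\<dots> = exp 1 * exp 1 * exp 1 * exp 1" by (simp only: exp_add)
      finally show ?thesis by (simp add: power2_eq_square)
    qed
    have e3m: "exp (-3::real) * (exp 1 * exp 1 * exp 1) = 1"
    proof -
      have "exp (3::real) = exp (1+1+1)" by simp
      also have "\<dots> = exp 1 * exp 1 * exp 1" by (simp only: exp_add)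
      finally show ?thesis by (simp flip: exp_add)
    qed
    have "c * wprod a t \<le> 2 * (exp 1)^2 * \<gamma> * x * exp (- (2/7 * Q))"
    proof (cases "x \<le> 7 * exp 1")
      case True
      have "Q \<le> 21/2" using small_case[OF x1 True] by (simp add: Q_def)
      then have E3: "exp (-3) \<le> exp (- (2/7 * Q))" by simp
      have "c * wprod a t \<le> c * 1" using w_le1 c by (intro mult_left_mono) simp_all
      also have "\<dots> \<le> 3*\<gamma>/8" using c_le by simp
      also have "\<dots> \<le> 2 * (exp 1)^2 * \<gamma> * 1 * exp (-3)"
      proof -
        have "(exp 1)^2 * exp (-3::real) * exp 1 = 1" using e3m by (simp add: power2_eq_square algebra_simps)
        then have "(exp 1)^2 * exp (-3::real) = 1 / exp 1" using e0 by (simp add: eq_divide_eq)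
        moreover have "1/3 \<le> 1 / exp (1::real)" by (rule divide_left_mono[OF e3]) simp_all
        ultimately have K: "1/3 \<le> (exp 1)^2 * exp (-3::real)" by simp
        have "3*\<gamma>/8 \<le> \<gamma> * (2 * (1/3))" using g by simp
        also have "\<dots> \<le> \<gamma> * (2 * ((exp 1)^2 * exp (-3::real)))" using K g by (intro mult_left_mono) simp_all
        also have "\<dots> = 2 * (exp 1)^2 * \<gamma> * 1 * exp (-3)" by (simp add: algebra_simps)
        finally show ?thesis .
      qed
      also have "\<dots> \<le> 2 * (exp 1)^2 * \<gamma> * x * exp (- (2/7 * Q))"
        using xge1 E3 g by (intro mult_mono mult_left_mono) simp_all
      finally show ?thesis .
    next
      case False
      define y where "y = a 1 * t"
      have yl: "x/7 \<le> y" using a1_ge t0 by (simp add: y_def x_def mult_right_mono)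
      have yu: "y \<le> x/2" using a_le[of 0] t0 by (simp add: y_def x_def mult_right_mono)
      have ye: "exp 1 \<le> y" using False yl by simp
      have y0: "0 < y" using ye by (meson exp_gt_zero less_le_trans)
      define M where "M = y / (ln y)^2"
      have wu: "wprod a t \<le> exp 4 * max 1 M * exp (-2*M)"
        using w_upper[of t] ye by (simp add: M_def y_def)
      have ly: "1 \<le> ln y" using ye y0 by (simp add: ln_ge_iff)
      have lyx: "ln y \<le> ln x" using yu y0 x0 by simp
      have My: "M \<le> y" unfolding M_def using Q_le[OF y0 _ ly] by simp
      have "1 \<le> exp (1::real)" by simp
      then have A: "1 \<le> x/2" using False by linarith
      have B: "M \<le> x/2" using My yu by linarith
      have Mx: "max 1 M \<le> x/2" using A B by simp
      have QM: "2/7 * Q \<le> 2 * M"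
      proof -
        have "(ln y)^2 \<le> (ln x)^2" by (rule power_mono) (use ly lyx in simp_all)
        moreover have q1: "0 < (ln y)^2" using ly by simp
        ultimately have q2: "0 < (ln x)^2" by linarith
        have "(x/7)/(ln x)^2 \<le> (x/7)/(ln y)^2"
          by (rule divide_left_mono[OF \<open>(ln y)^2 \<le> (ln x)^2\<close> _ mult_pos_pos[OF q2 q1]]) (use x0 in simp)
        also have "\<dots> \<le> y/(ln y)^2" using yl by (intro divide_right_mono) simp_all
        finally show ?thesis by (simp add: Q_def M_def)
      qed
      have "c * wprod a t \<le> (3*\<gamma>/8) * (exp 4 * (x/2) * exp (- (2/7 * Q)))"
      proof (rule mult_mono)
        show "c \<le> 3*\<gamma>/8" by (rule c_le)
        have "wprod a t \<le> exp 4 * max 1 M * exp (-2*M)" by (rule wu)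
        also have "\<dots> \<le> exp 4 * (x/2) * exp (- (2/7 * Q))"
          using Mx QM by (intro mult_mono mult_left_mono) simp_all
        finally show "wprod a t \<le> exp 4 * (x/2) * exp (- (2/7 * Q))" .
      qed (use g w0 in simp_all)
      also have "\<dots> = (3/16 * (exp 1)^2) * ((exp 1)^2 * \<gamma> * x * exp (- (2/7 * Q)))"
        unfolding e4 by (simp add: power2_eq_square algebra_simps)
      also have "\<dots> \<le> 2 * ((exp 1)^2 * \<gamma> * x * exp (- (2/7 * Q)))"
        using ee g x0 by (intro mult_right_mono) simp_all
      finally show ?thesis by (simp add: mult.assoc)
    qed
    then have main: "c * wprod a t \<le> 2 * (exp 1 * \<gamma>)\<^sup>2 * t * exp (- (2 / 7) * (\<gamma> * t) / (ln (\<gamma> * t))\<^sup>2)"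
      unfolding Eeq R .
    moreover have "0 \<le> c * wprod a t" using c w0 by simp
    ultimately show ?thesis by blast
  qed
  show ?thesis using conv w_even w_nonneg w_int P5 P6 by blast
qed


end
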